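(* Let $k\ge0$. Assume $\nabla_x f$ exists on $X\times Y$ and $\|\nabla_x f(x',y')-\nabla_x f(x,y)\|\le\lambda\|x'-x\|+\mu\|y'-y\|$ for all $x,x'\in X,y,y'\in Y$ (possibly with $\mu=\infty$). If $k\ge1$, assume moreover: $\nabla^{k+1}_{xy\cdots y}f$ exists and $\|\nabla^{k+1}_{xy\cdots y}f(x',y)-\nabla^{k+1}_{xy\cdots y}f(x,y)\|\le\tau_k\|x'-x\|$ for all $x,x'\in X$, $y\in Y$; the set $\{(x,y):x\in X,\,y\in Y'_x\}$ is Lebesgue measurable, where $Y'_x$ is the set of $y\in Y$ at which $\nabla^{k+2}_{xxy\cdots y}f(x,y)$ does not exist; and $\nabla^k_{y\cdots y}f(x,\cdot)$ is continuous for all $x\in X$. Then for every $\hat y\in Y$ and every $y\in Y$, the map $x\mapsto\nabla_x\hat f_k(x,y)$ is $\bar\lambda_k$-Lipschitz on $X$, where $$\bar\lambda_k=\lambda+\frac{2\tau_k\mathsf D^k}{k!}\mathbb 1\{k\ge1\}.$$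
   Context: Let $E_x,E_y$ be finite-dimensional Euclidean spaces with Euclidean norms; for tensors $\|\cdot\|$ is the induced operator norm. Let $X\subseteq E_x$, $Y\subseteq E_y$ be convex with nonempty interior, $Y$ compact, $\mathsf D\ge\mathrm{diam}(Y)$, $f:X\times Y\to\mathbb R$. $\nabla^j_{y\cdots y}f$ denotes the tensor of $j$-th order partial derivatives in $y$; $\nabla^{k+1}_{xy\cdots y}f$ and $\nabla^{k+2}_{xxy\cdots y}f$ denote the tensors with $k$ derivatives in $y$ and additionally one, resp. two, derivatives in $x$. For $\hat y\in Y$, $\hat f_k(x,y)=\sum_{j=0}^k\frac1{j!}\nabla^j_{y\cdots y}f(x,\hat y)[(y-\hat y)^j]$, with $T[v^j]=T[v,\dots,v]$. *)

theory Defs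
  imports "HOL-Analysis.Analysis"
begin

text \<open>Tensors: a pure-y tensor of order j is represented as a function on lists of
 vectors of length j (a multilinear form); a mixed tensor with one x-slot and k y-slots
 as a function of type 'a => 'b list => real.  Derivative tensors are related to the
 function through componentwise (within-set) Frechet derivatives, which in finite
 dimensions is equivalent to Frechet differentiability of the tensor-valued map.\<close>

definition mixed_opnorm :: "nat \<Rightarrow> ('a::euclidean_space \<Rightarrow> 'b::euclidean_space list \<Rightarrow> real) \<Rightarrow> real" where
  "mixed_opnorm k T =
     (SUP p \<in> {(u, vs). norm u \<le> 1 \<and> length vs = k \<and> (\<forall>v\<in>set vs. norm v \<le> 1)}.
        \<bar>T (fst p) (snd p)\<bar>)"

definition taylor_y ::
  "(nat \<Rightarrow> 'a \<Rightarrow> 'b::real_vector \<Rightarrow> 'b list \<Rightarrow> real) \<Rightarrow> nat \<Rightarrow> 'b \<Rightarrow> 'a \<Rightarrow> 'b \<Rightarrow> real" where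
  "taylor_y Dy k yhat x y = (\<Sum>j\<le>k. (1 / fact j) * Dy j x yhat (replicate j (y - yhat)))"

text \<open>Y'_x: the points y in Y where the (k+2)-th mixed derivative (second x-derivative
 of the k-th y-derivative, i.e. x-derivative of Dxy) does not exist.\<close>
definition no_xx_deriv ::
  "('a::euclidean_space \<Rightarrow> 'b::euclidean_space \<Rightarrow> 'a \<Rightarrow> 'b list \<Rightarrow> real) \<Rightarrow> 'a set \<Rightarrow> 'b set \<Rightarrow> 'a \<Rightarrow> 'b set" where
  "no_xx_deriv Dxy X Y x =
     {y \<in> Y. \<not> (\<exists>T2 :: 'a \<Rightarrow> 'a \<Rightarrow> 'b list \<Rightarrow> real.
         \<forall>u vs. ((\<lambda>x'. Dxy x' y u vs) has_derivative (\<lambda>w. T2 w u vs)) (at x within X))}"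

end

theory Submission
  imports Defs
begin

lemma deriv_unique_convex:
  fixes f :: "'a::euclidean_space \<Rightarrow> real"
  assumes S: "convex S" "interior S \<noteq> {}" and x: "x \<in> S"
    and d1: "(f has_derivative f1) (at x within S)" and d2: "(f has_derivative f2) (at x within S)"
  shows "f1 = f2"
proof -
  have l1: "linear f1" using d1 has_derivative_linear by blast
  have l2: "linear f2" using d2 has_derivative_linear by blast
  have seg: "f1 (v - x) = f2 (v - x)" if v: "v \<in> S" for v
  proof -
    let ?p = "\<lambda>t::real. x + t *\<^sub>R (v - x)"
    have sub: "?p ` {0..1} \<subseteq> S"
    proof
      fix z assume "z \<in> ?p ` {0..1}"
      then obtain t where t: "t \<in> {0..1}" "z = ?p t" by auto
      have "z = (1 - t) *\<^sub>R x + t *\<^sub>R v" using t by (simp add: algebra_simps)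
      then show "z \<in> S" using S(1) x v t by (simp add: convexD_alt)
    qed
    have dp: "(?p has_derivative (\<lambda>t. t *\<^sub>R (v - x))) (at 0 within {0..1})"
      by (auto intro!: derivative_eq_intros)
    have D1: "((f \<circ> ?p) has_derivative (f1 \<circ> (\<lambda>t. t *\<^sub>R (v - x)))) (at 0 within {0..1})"
      by (rule diff_chain_within[OF dp]) (use has_derivative_subset[OF _ sub] d1 in simp)
    have D2: "((f \<circ> ?p) has_derivative (f2 \<circ> (\<lambda>t. t *\<^sub>R (v - x)))) (at 0 within {0..1})"
      by (rule diff_chain_within[OF dp]) (use has_derivative_subset[OF _ sub] d2 in simp)
    have c: "cbox (0::real) 1 = {0..1}" by (simp add: cbox_interval)
    have "(f1 \<circ> (\<lambda>t. t *\<^sub>R (v - x))) = (f2 \<circ> (\<lambda>t. t *\<^sub>R (v - x)))"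
      apply (rule frechet_derivative_unique_within_closed_interval[of 0 1 0 "f \<circ> ?p", unfolded c])
      using D1 D2 by auto
    then show ?thesis by (metis comp_apply scaleR_one)
  qed
  obtain z where z: "z \<in> interior S" using S(2) by blast
  then obtain r where r: "r > 0" "ball z r \<subseteq> S" using mem_interior by blast
  have "f1 h = f2 h" for h
  proof -
    define e where "e = r / (norm h + 1)"
    have e: "e > 0" unfolding e_def using r by (intro divide_pos_pos) (auto intro: add_nonneg_pos)
    have np: "norm h + 1 > 0" by (simp add: add_nonneg_pos)
    have "norm (e *\<^sub>R h) = r * norm h / (norm h + 1)" using r by (simp add: e_def)
    also have "\<dots> < r" using r np by (simp add: divide_less_eq)
    finally have "norm (e *\<^sub>R h) < r" .
    then have "z + e *\<^sub>R h \<in> S" using r by (auto simp: dist_norm)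
    moreover have "z \<in> S" using r by auto
    ultimately have "f1 ((z + e *\<^sub>R h) - x) - f1 (z - x) = f2 ((z + e *\<^sub>R h) - x) - f2 (z - x)"
      using seg by simp
    moreover have "(z + e *\<^sub>R h) - x = (z - x) + e *\<^sub>R h" by simp
    ultimately have "e * f1 h = e * f2 h"
      using l1 l2 by (simp add: linear_add linear_scale)
    then show ?thesis using e by simp
  qed
  then show ?thesis by auto
qed

lemma linear_transfer:
  fixes F :: "'c::real_vector \<Rightarrow> 'a::euclidean_space \<Rightarrow> real"
  assumes S: "convex S" "interior S \<noteq> {}" and x: "x \<in> S"
    and d: "\<And>v. ((\<lambda>s. F v s) has_derivative (\<lambda>h. F' v h)) (at x within S)"
    and l: "\<And>s. s \<in> S \<Longrightarrow> linear (\<lambda>v. F v s)"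
  shows "linear (\<lambda>v. F' v h)"
proof (rule linearI)
  fix p q :: 'c
  have "((\<lambda>s. F p s + F q s) has_derivative (\<lambda>h. F' p h + F' q h)) (at x within S)"
    by (intro has_derivative_add d)
  then have "((\<lambda>s. F (p + q) s) has_derivative (\<lambda>h. F' p h + F' q h)) (at x within S)"
    by (rule has_derivative_transform[OF x, rotated]) (simp add: linear_add[OF l])
  then have "(\<lambda>h. F' (p + q) h) = (\<lambda>h. F' p h + F' q h)"
    using deriv_unique_convex[OF S x d[of "p + q"]] by blast
  then show "F' (p + q) h = F' p h + F' q h" by metis
next
  fix c :: real and p :: 'c
  have "((\<lambda>s. c * F p s) has_derivative (\<lambda>h. c * F' p h)) (at x within S)"
    by (intro has_derivative_mult_right d)
  then have "((\<lambda>s. F (c *\<^sub>R p) s) has_derivative (\<lambda>h. c * F' p h)) (at x within S)"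
    by (rule has_derivative_transform[OF x, rotated]) (simp add: linear_scale[OF l])
  then have "(\<lambda>h. F' (c *\<^sub>R p) h) = (\<lambda>h. c * F' p h)"
    using deriv_unique_convex[OF S x d[of "c *\<^sub>R p"]] by blast
  then show "F' (c *\<^sub>R p) h = c *\<^sub>R F' p h" by (metis real_scaleR_def)
qed

lemma lin_expand:
  fixes f :: "'a::euclidean_space \<Rightarrow> real"
  assumes l: "linear f"
  shows "f v = (\<Sum>b\<in>Basis. (v \<bullet> b) * f b)"
proof -
  have "f v = f (\<Sum>b\<in>Basis. (v \<bullet> b) *\<^sub>R b)" by (simp add: euclidean_representation)
  also have "\<dots> = (\<Sum>b\<in>Basis. (v \<bullet> b) * f b)" by (simp add: linear_sum[OF l] linear_scale[OF l])
  finally show ?thesis .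
qed

lemma ml_bounded:
  fixes T :: "'b::euclidean_space list \<Rightarrow> real"
  assumes "\<forall>i<n. \<forall>vs. length vs = n \<longrightarrow> linear (\<lambda>v. T (vs[i:=v]))"
  shows "\<exists>M. \<forall>vs. length vs = n \<and> (\<forall>v\<in>set vs. norm v \<le> 1) \<longrightarrow> \<bar>T vs\<bar> \<le> M"
  using assms
proof (induction n arbitrary: T)
  case 0
  then show ?case by (intro exI[of _ "\<bar>T []\<bar>"]) auto
next
  case (Suc n)
  have "\<forall>b\<in>Basis. \<exists>M. \<forall>vs. length vs = n \<and> (\<forall>v\<in>set vs. norm v \<le> 1) \<longrightarrow> \<bar>T (b # vs)\<bar> \<le> M"
  proof
    fix b :: 'b
    have "\<forall>i<n. \<forall>vs. length vs = n \<longrightarrow> linear (\<lambda>v. T (b # vs[i:=v]))"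
    proof (intro allI impI)
      fix i vs assume "i < n" "length (vs::'b list) = n"
      then have "linear (\<lambda>v. T ((b # vs)[Suc i:=v]))" using Suc.prems[rule_format, of "Suc i" "b # vs"] by simp
      then show "linear (\<lambda>v. T (b # vs[i:=v]))" by simp
    qed
    then show "\<exists>M. \<forall>vs. length vs = n \<and> (\<forall>v\<in>set vs. norm v \<le> 1) \<longrightarrow> \<bar>T (b # vs)\<bar> \<le> M"
      using Suc.IH[of "\<lambda>vs. T (b # vs)"] by simp
  qed
  then obtain Mf where Mf: "\<And>b vs. b \<in> Basis \<Longrightarrow> length vs = n \<Longrightarrow> (\<forall>v\<in>set vs. norm v \<le> 1) \<Longrightarrow> \<bar>T (b # vs)\<bar> \<le> Mf b"
    by metis
  show ?case
  proof (intro exI[of _ "\<Sum>b\<in>Basis. Mf b"] allI impI)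
    fix vs :: "'b list" assume a: "length vs = Suc n \<and> (\<forall>v\<in>set vs. norm v \<le> 1)"
    then obtain v ws where vs: "vs = v # ws" and ws: "length ws = n" by (cases vs) auto
    have nv: "norm v \<le> 1" and nws: "\<forall>v\<in>set ws. norm v \<le> 1" using a vs by auto
    have "linear (\<lambda>u. T ((v # ws)[0:=u]))" using Suc.prems ws by (metis length_Cons zero_less_Suc)
    then have lin: "linear (\<lambda>u. T (u # ws))" by simp
    have "\<bar>T vs\<bar> = \<bar>\<Sum>b\<in>Basis. (v \<bullet> b) * T (b # ws)\<bar>"
      using lin_expand[OF lin, of v] vs by simp
    also have "\<dots> \<le> (\<Sum>b\<in>Basis. \<bar>(v \<bullet> b) * T (b # ws)\<bar>)" by (rule sum_abs)
    also have "\<dots> \<le> (\<Sum>b\<in>Basis. Mf b)"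
    proof (rule sum_mono)
      fix b :: 'b assume b: "b \<in> Basis"
      have "\<bar>v \<bullet> b\<bar> \<le> 1" using Basis_le_norm[OF b, of v] nv by linarith
      moreover have "\<bar>T (b # ws)\<bar> \<le> Mf b" using Mf[OF b ws nws] .
      ultimately show "\<bar>(v \<bullet> b) * T (b # ws)\<bar> \<le> Mf b"
        by (simp add: abs_mult) (metis abs_ge_zero mult_le_one mult_right_mono order_trans mult_1)
    qed
    finally show "\<bar>T vs\<bar> \<le> (\<Sum>b\<in>Basis. Mf b)" .
  qed
qed

lemma ml_hom:
  fixes T :: "'b::real_vector list \<Rightarrow> real"
  assumes ml: "\<forall>i<n. \<forall>vs. length vs = n \<longrightarrow> linear (\<lambda>v. T (vs[i:=v]))"
  shows "T (replicate n (c *\<^sub>R w)) = c ^ n * T (replicate n w)"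
proof -
  have "m \<le> n \<Longrightarrow> T (replicate m (c *\<^sub>R w) @ replicate (n - m) w) = c ^ m * T (replicate n w)" for m
  proof (induction m)
    case 0 then show ?case by simp
  next
    case (Suc m)
    then obtain k where k: "n - m = Suc k" by (metis Suc_diff_le diff_Suc_Suc le_SucE less_eq_Suc_le not_less_eq_eq)
    have k2: "n - Suc m = k" using k by simp
    define vs where "vs = replicate m (c *\<^sub>R w) @ replicate (n - m) w"
    have lv: "length vs = n" using Suc by (simp add: vs_def)
    have "linear (\<lambda>v. T (vs[m:=v]))" using ml lv Suc by simp
    then have "T (vs[m := c *\<^sub>R w]) = c * T (vs[m := w])" using linear_scale by fastforce
    moreover have "vs[m := c *\<^sub>R w] = replicate (Suc m) (c *\<^sub>R w) @ replicate (n - Suc m) w"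
    proof -
      have "vs = replicate m (c *\<^sub>R w) @ w # replicate k w" by (simp add: vs_def k)
      then have "vs[m := c *\<^sub>R w] = replicate m (c *\<^sub>R w) @ c *\<^sub>R w # replicate k w"
        by (simp add: list_update_append)
      also have "\<dots> = (replicate m (c *\<^sub>R w) @ [c *\<^sub>R w]) @ replicate k w" by simp
      also have "\<dots> = replicate (Suc m) (c *\<^sub>R w) @ replicate (n - Suc m) w"
        by (simp only: replicate_append_same k2 replicate_Suc)
      finally show ?thesis .
    qed
    moreover have "vs[m := w] = vs" by (simp add: vs_def k list_update_append)
    ultimately show ?case using Suc by (simp add: vs_def)
  qed
  from this[of n] show ?thesis by simp
qed


lemma norm_sgn_scale: "norm x *\<^sub>R sgn x = (x::'a::real_normed_vector)"
  by (cases "x = 0") (simp_all add: sgn_div_norm)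

lemma lin_repr:
  fixes l :: "'a::euclidean_space \<Rightarrow> real"
  assumes "linear l"
  shows "l u = (\<Sum>b\<in>Basis. l b *\<^sub>R b) \<bullet> u"
proof -
  have "(\<Sum>b\<in>Basis. l b *\<^sub>R b) \<bullet> u = (\<Sum>b\<in>Basis. (u \<bullet> b) * l b)"
    by (subst inner_commute) (simp add: inner_sum_right mult.commute)
  then show ?thesis using lin_expand[OF assms, of u] by simp
qed

theorem lemma3:
  fixes f :: "'a::euclidean_space \<Rightarrow> 'b::euclidean_space \<Rightarrow> real"
    and X :: "'a set" and Y :: "'b set"
    and gx :: "'a \<Rightarrow> 'b \<Rightarrow> 'a"
    and Dy :: "nat \<Rightarrow> 'a \<Rightarrow> 'b \<Rightarrow> 'b list \<Rightarrow> real"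
    and Dxy :: "'a \<Rightarrow> 'b \<Rightarrow> 'a \<Rightarrow> 'b list \<Rightarrow> real"
    and k :: nat and lam tau D :: real and mu :: ereal
  assumes X: "convex X" "interior X \<noteq> {}"
    and Y: "convex Y" "interior Y \<noteq> {}" "compact Y"
    and D: "diameter Y \<le> D"
    \<comment> \<open>gradient in x of f exists on X \<times> Y and satisfies the joint Lipschitz bound\<close>
    and gx: "\<forall>x\<in>X. \<forall>y\<in>Y. ((\<lambda>x'. f x' y) has_derivative (\<lambda>u. gx x y \<bullet> u)) (at x within X)"
    and gx_lip: "\<forall>x\<in>X. \<forall>x'\<in>X. \<forall>y\<in>Y. \<forall>y'\<in>Y.
        ereal (norm (gx x' y' - gx x y)) \<le> ereal lam * ereal (norm (x' - x)) + mu * ereal (norm (y' - y))"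
    \<comment> \<open>Dy j x y is the j-th y-derivative tensor of f at (x,y)\<close>
    and Dy0: "\<forall>x y vs. Dy 0 x y vs = f x y"
    and Dy: "k \<ge> 1 \<Longrightarrow> \<forall>j<k. \<forall>x\<in>X. \<forall>y\<in>Y. \<forall>vs.
        ((\<lambda>y'. Dy j x y' vs) has_derivative (\<lambda>v. Dy (Suc j) x y (v # vs))) (at y within Y)"
    \<comment> \<open>Dxy x y is the mixed derivative tensor with one x-slot and k y-slots\<close>
    and Dxy: "k \<ge> 1 \<Longrightarrow> \<forall>x\<in>X. \<forall>y\<in>Y. \<forall>vs.
        ((\<lambda>x'. Dy k x' y vs) has_derivative (\<lambda>u. Dxy x y u vs)) (at x within X)"
    and Dxy_lip: "k \<ge> 1 \<Longrightarrow> \<forall>x\<in>X. \<forall>x'\<in>X. \<forall>y\<in>Y.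
        mixed_opnorm k (\<lambda>u vs. Dxy x' y u vs - Dxy x y u vs) \<le> tau * norm (x' - x)"
    and meas: "k \<ge> 1 \<Longrightarrow>
        {(x, y). x \<in> X \<and> y \<in> no_xx_deriv Dxy X Y x} \<in> sets (lebesgue :: ('a \<times> 'b) measure)"
    and cont: "k \<ge> 1 \<Longrightarrow> \<forall>x\<in>X. \<forall>vs. continuous_on Y (\<lambda>y. Dy k x y vs)"
  shows "\<forall>yhat\<in>Y. \<forall>y\<in>Y. \<exists>G :: 'a \<Rightarrow> 'a.
           (\<forall>x\<in>X. ((\<lambda>x'. taylor_y Dy k yhat x' y) has_derivative (\<lambda>u. G x \<bullet> u)) (at x within X)) \<and>
           (\<forall>x\<in>X. \<forall>x'\<in>X. norm (G x' - G x)
               \<le> (lam + (if k \<ge> 1 then 2 * tau * D ^ k / fact k else 0)) * norm (x' - x))"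
proof (intro ballI)
  fix yhat y assume yh: "yhat \<in> Y" and yY: "y \<in> Y"
  have gxl: "norm (gx x' z - gx x z) \<le> lam * norm (x' - x)" if "x \<in> X" "x' \<in> X" "z \<in> Y" for x x' z
  proof -
    have "ereal (norm (gx x' z - gx x z)) \<le> ereal lam * ereal (norm (x' - x)) + mu * ereal (norm (z - z))"
      using gx_lip that by blast
    moreover have "mu * ereal 0 = 0" by (simp add: zero_ereal_def[symmetric])
    ultimately show ?thesis by simp
  qed
  obtain x0 r0 where r0: "r0 > 0" "ball x0 r0 \<subseteq> X" using X(2) mem_interior by blast
  obtain e0 :: 'a where e0: "e0 \<in> Basis" using nonempty_Basis by blast
  define x1 where "x1 = x0 + (r0 / 2) *\<^sub>R e0"
  have x0X: "x0 \<in> X" using r0 by auto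
  have x1X: "x1 \<in> X" using r0 e0 by (auto simp: x1_def dist_norm)
  have n01: "norm (x1 - x0) > 0" using r0 e0 by (simp add: x1_def)
  have lam_nn: "0 \<le> lam"
    using gxl[OF x0X x1X yh] n01 by (metis norm_ge_zero order_trans zero_le_mult_iff not_less)
  show "\<exists>G :: 'a \<Rightarrow> 'a.
           (\<forall>x\<in>X. ((\<lambda>x'. taylor_y Dy k yhat x' y) has_derivative (\<lambda>u. G x \<bullet> u)) (at x within X)) \<and>
           (\<forall>x\<in>X. \<forall>x'\<in>X. norm (G x' - G x)
               \<le> (lam + (if k \<ge> 1 then 2 * tau * D ^ k / fact k else 0)) * norm (x' - x))"
  proof (cases "k \<ge> 1")
    case False
    then have k0: "k = 0" by simp
    show ?thesis
    proof (intro exI[of _ "\<lambda>x. gx x yhat"] conjI ballI)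
      fix x assume x: "x \<in> X"
      show "((\<lambda>x'. taylor_y Dy k yhat x' y) has_derivative (\<lambda>u. gx x yhat \<bullet> u)) (at x within X)"
        using gx x yh by (simp add: taylor_y_def k0 Dy0)
    next
      fix x x' assume "x \<in> X" "x' \<in> X"
      then show "norm (gx x' yhat - gx x yhat) \<le> (lam + (if k \<ge> 1 then 2 * tau * D ^ k / fact k else 0)) * norm (x' - x)"
        using gxl yh k0 by simp
    qed
  next
    case True
    note Dy1 = Dy[OF True] and Dxy1 = Dxy[OF True] and lip1 = Dxy_lip[OF True] and cont1 = cont[OF True]
    define w where "w = y - yhat"
    define W where "W = replicate k w"
    define yt where "yt = (\<lambda>t::real. yhat + t *\<^sub>R w)"
    define rho where "rho = (\<lambda>t::real. (1 - t) ^ (k - 1) / fact (k - 1))"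
    have ytY: "yt t \<in> Y" if "t \<in> {0..1}" for t
    proof -
      have "yt t = (1 - t) *\<^sub>R yhat + t *\<^sub>R y" by (simp add: yt_def w_def algebra_simps)
      then show ?thesis using Y(1) yh yY that by (simp add: convexD_alt)
    qed
    have MLDy: "\<forall>x\<in>X. \<forall>z\<in>Y. \<forall>i<j. \<forall>vs. length vs = j \<longrightarrow> linear (\<lambda>v. Dy j x z (vs[i:=v]))"
      if "j \<le> k" for j
      using that
    proof (induction j)
      case 0
      then show ?case by simp
    next
      case (Suc j)
      show ?case
      proof (intro ballI allI impI)
        fix x z i and vs :: "'b list" assume x: "x \<in> X" and z: "z \<in> Y" and i: "i < Suc j" and lvs: "length vs = Suc j"
        obtain v0 vs' where vs: "vs = v0 # vs'" and lvs': "length vs' = j" using lvs by (cases vs) auto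
        have jk: "j < k" using Suc.prems by simp
        have dj: "((\<lambda>y'. Dy j x y' us) has_derivative (\<lambda>v. Dy (Suc j) x z (v # us))) (at z within Y)" for us
          using Dy1 jk x z by blast
        show "linear (\<lambda>v. Dy (Suc j) x z (vs[i:=v]))"
        proof (cases i)
          case 0
          then show ?thesis using has_derivative_linear[OF dj[of vs']] by (simp add: vs)
        next
          case (Suc i')
          have IH: "\<forall>x\<in>X. \<forall>z\<in>Y. \<forall>i<j. \<forall>vs. length vs = j \<longrightarrow> linear (\<lambda>v. Dy j x z (vs[i:=v]))"
            using Suc.IH Suc.prems by simp
          have "linear (\<lambda>v. Dy (Suc j) x z (v0 # vs'[i':=v]))"
            by (rule linear_transfer[OF Y(1) Y(2) z, of "\<lambda>v y'. Dy j x y' (vs'[i':=v])"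
                  "\<lambda>v h. Dy (Suc j) x z (h # vs'[i':=v])" v0])
              (use dj IH x Suc i lvs' in auto)
          then show ?thesis by (simp add: vs Suc)
        qed
      qed
    qed
    have MLDxy: "\<forall>i<k. \<forall>vs. length vs = k \<longrightarrow> linear (\<lambda>v. Dxy x z u (vs[i:=v]))"
      if x: "x \<in> X" and z: "z \<in> Y" for x z u
    proof (intro allI impI)
      fix i vs assume i: "i < k" and lvs: "length (vs::'b list) = k"
      show "linear (\<lambda>v. Dxy x z u (vs[i:=v]))"
        by (rule linear_transfer[OF X(1) X(2) x, of "\<lambda>v x'. Dy k x' z (vs[i:=v])"
                  "\<lambda>v h. Dxy x z h (vs[i:=v])" u])
           (use Dxy1 MLDy[of k] x z i lvs in auto)
    qed
    have lin_u: "linear (\<lambda>u. Dxy x z u vs)" if "x \<in> X" "z \<in> Y" for x z vs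
      using has_derivative_linear Dxy1 that by blast
    have hom: "Dxy x z u (replicate k (c *\<^sub>R v)) = c ^ k * Dxy x z u (replicate k v)"
      if "x \<in> X" "z \<in> Y" for x z u c v
      using ml_hom[OF MLDxy[OF that]] .
    have bnd: "\<exists>M. \<forall>u vs. norm u \<le> 1 \<and> length vs = k \<and> (\<forall>v\<in>set vs. norm v \<le> 1) \<longrightarrow> \<bar>Dxy x z u vs\<bar> \<le> M"
      if x: "x \<in> X" and z: "z \<in> Y" for x z
    proof -
      have "\<forall>b\<in>Basis. \<exists>M. \<forall>vs. length vs = k \<and> (\<forall>v\<in>set vs. norm v \<le> 1) \<longrightarrow> \<bar>Dxy x z b vs\<bar> \<le> M"
        using ml_bounded[OF MLDxy[OF x z]] by blast
      then obtain Mf where Mf: "\<And>b vs. b \<in> Basis \<Longrightarrow> length vs = k \<Longrightarrow> (\<forall>v\<in>set vs. norm v \<le> 1) \<Longrightarrow> \<bar>Dxy x z b vs\<bar> \<le> Mf b"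
        by metis
      show ?thesis
      proof (intro exI[of _ "\<Sum>b\<in>Basis. Mf b"] allI impI)
        fix u :: 'a and vs :: "'b list" assume a: "norm u \<le> 1 \<and> length vs = k \<and> (\<forall>v\<in>set vs. norm v \<le> 1)"
        have "\<bar>Dxy x z u vs\<bar> = \<bar>\<Sum>b\<in>Basis. (u \<bullet> b) * Dxy x z b vs\<bar>"
          using lin_expand[OF lin_u[OF x z], of u] by simp
        also have "\<dots> \<le> (\<Sum>b\<in>Basis. \<bar>(u \<bullet> b) * Dxy x z b vs\<bar>)" by (rule sum_abs)
        also have "\<dots> \<le> (\<Sum>b\<in>Basis. Mf b)"
        proof (rule sum_mono)
          fix b :: 'a assume b: "b \<in> Basis"
          have "\<bar>u \<bullet> b\<bar> \<le> 1" using Basis_le_norm[OF b, of u] a by linarith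
          moreover have "\<bar>Dxy x z b vs\<bar> \<le> Mf b" using Mf[OF b] a by blast
          ultimately show "\<bar>(u \<bullet> b) * Dxy x z b vs\<bar> \<le> Mf b"
            by (simp add: abs_mult) (metis abs_ge_zero mult_right_mono order_trans mult_1)
        qed
        finally show "\<bar>Dxy x z u vs\<bar> \<le> (\<Sum>b\<in>Basis. Mf b)" .
      qed
    qed
    have KB: "\<bar>Dxy x' z u (replicate k v) - Dxy x z u (replicate k v)\<bar> \<le> tau * norm (x' - x) * norm u * norm v ^ k
         \<and> 0 \<le> tau * norm (x' - x)"
      if x: "x \<in> X" and x': "x' \<in> X" and z: "z \<in> Y" for x x' z u v
    proof -
      define A where "A = {(u::'a, vs::'b list). norm u \<le> 1 \<and> length vs = k \<and> (\<forall>v\<in>set vs. norm v \<le> 1)}"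
      obtain M1 where M1: "\<And>u vs. norm u \<le> 1 \<and> length vs = k \<and> (\<forall>v\<in>set vs. norm v \<le> 1) \<Longrightarrow> \<bar>Dxy x z u vs\<bar> \<le> M1"
        using bnd[OF x z] by blast
      obtain M2 where M2: "\<And>u vs. norm u \<le> 1 \<and> length vs = k \<and> (\<forall>v\<in>set vs. norm v \<le> 1) \<Longrightarrow> \<bar>Dxy x' z u vs\<bar> \<le> M2"
        using bnd[OF x' z] by blast
      have bdd: "bdd_above ((\<lambda>p. \<bar>Dxy x' z (fst p) (snd p) - Dxy x z (fst p) (snd p)\<bar>) ` A)"
      proof (rule bdd_aboveI[of _ "M1 + M2"])
        fix r assume "r \<in> (\<lambda>p. \<bar>Dxy x' z (fst p) (snd p) - Dxy x z (fst p) (snd p)\<bar>) ` A"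
        then obtain u vs where p: "(u, vs) \<in> A" and r: "r = \<bar>Dxy x' z u vs - Dxy x z u vs\<bar>" by auto
        have "\<bar>Dxy x z u vs\<bar> \<le> M1" "\<bar>Dxy x' z u vs\<bar> \<le> M2" using p M1 M2 by (auto simp: A_def)
        then show "r \<le> M1 + M2" using r by linarith
      qed
      have up: "\<bar>Dxy x' z u vs - Dxy x z u vs\<bar> \<le> tau * norm (x' - x)" if p: "(u, vs) \<in> A" for u vs
      proof -
        have "\<bar>Dxy x' z u vs - Dxy x z u vs\<bar> \<le> mixed_opnorm k (\<lambda>u vs. Dxy x' z u vs - Dxy x z u vs)"
          unfolding mixed_opnorm_def A_def[symmetric]
          using cSUP_upper[OF p bdd] by simp
        also have "\<dots> \<le> tau * norm (x' - x)" using lip1 x x' z by blast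
        finally show ?thesis .
      qed
      define u' where "u' = sgn u"
      define v' where "v' = sgn v"
      have A': "(u', replicate k v') \<in> A" by (auto simp: A_def u'_def v'_def norm_sgn)
      have eq: "Dxy p z u (replicate k v) = norm u * norm v ^ k * Dxy p z u' (replicate k v')"
        if p: "p \<in> X" for p
      proof -
        have "Dxy p z u (replicate k v) = Dxy p z (norm u *\<^sub>R u') (replicate k (norm v *\<^sub>R v'))"
          by (simp add: u'_def v'_def norm_sgn_scale)
        also have "\<dots> = norm v ^ k * Dxy p z (norm u *\<^sub>R u') (replicate k v')" using hom[OF p z] by simp
        also have "\<dots> = norm v ^ k * (norm u * Dxy p z u' (replicate k v'))"
          using linear_scale[OF lin_u[OF p z]] by simp
        finally show ?thesis by simp
      qed
      have b1: "\<bar>Dxy x' z u' (replicate k v') - Dxy x z u' (replicate k v')\<bar> \<le> tau * norm (x' - x)"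
        using up[OF A'] .
      have "\<bar>Dxy x' z u (replicate k v) - Dxy x z u (replicate k v)\<bar>
          = norm u * norm v ^ k * \<bar>Dxy x' z u' (replicate k v') - Dxy x z u' (replicate k v')\<bar>"
        using eq[OF x] eq[OF x'] by (simp add: right_diff_distrib[symmetric] abs_mult)
      also have "\<dots> \<le> norm u * norm v ^ k * (tau * norm (x' - x))"
        by (rule mult_left_mono[OF b1]) simp
      finally show ?thesis using b1 by (simp add: algebra_simps)
    qed
    have tau_nn: "0 \<le> tau"
      using KB[OF x0X x1X yh] n01 by (metis zero_le_mult_iff not_less norm_ge_zero order.strict_iff_not)
    have MVT: "\<bar>Dy k x' z W - Dy k x z W - Dxy x z (x' - x) W\<bar> \<le> tau * norm (x' - x) ^ 2 * norm w ^ k"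
      if x: "x \<in> X" and x': "x' \<in> X" and z: "z \<in> Y" for x x' z
    proof -
      let ?S = "closed_segment x x'"
      have segX: "?S \<subseteq> X" using X(1) x x' by (simp add: closed_segment_subset)
      have bl: "bounded_linear (\<lambda>h. Dxy x z h W)" using lin_u[OF x z] linear_conv_bounded_linear by blast
      have dl: "((\<lambda>p. Dxy x z (p - x) W) has_derivative (\<lambda>h. Dxy x z h W)) (at p within ?S)" for p
        using bounded_linear.has_derivative[OF bl, of "\<lambda>p. p - x" "\<lambda>h. h" "at p within ?S"]
        by (simp add: has_derivative_diff[OF has_derivative_ident has_derivative_const, simplified])
      have "norm ((\<lambda>p. Dy k p z W - Dxy x z (p - x) W) x' - (\<lambda>p. Dy k p z W - Dxy x z (p - x) W) x)
          \<le> (tau * norm (x' - x) * norm w ^ k) * norm (x' - x)"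
      proof (rule differentiable_bound[where f' = "\<lambda>p h. Dxy p z h W - Dxy x z h W"])
        show "convex ?S" by simp
        show "x \<in> ?S" "x' \<in> ?S" by auto
        fix p assume p: "p \<in> ?S"
        have pX: "p \<in> X" using p segX by blast
        show "((\<lambda>p. Dy k p z W - Dxy x z (p - x) W) has_derivative (\<lambda>h. Dxy p z h W - Dxy x z h W)) (at p within ?S)"
          by (intro has_derivative_diff dl has_derivative_subset[OF _ segX]) (use Dxy1 pX z in blast)
        have np: "norm (p - x) \<le> norm (x' - x)"
          using p by (metis dist_in_closed_segment dist_norm dist_commute)
        show "onorm (\<lambda>h. Dxy p z h W - Dxy x z h W) \<le> tau * norm (x' - x) * norm w ^ k"
        proof (rule onorm_le)
          fix h
          have "\<bar>Dxy p z h W - Dxy x z h W\<bar> \<le> tau * norm (p - x) * norm h * norm w ^ k"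
            using KB[OF x pX z, of h w] by (simp add: W_def)
          also have "\<dots> \<le> tau * norm (x' - x) * norm h * norm w ^ k"
            using np tau_nn by (intro mult_right_mono mult_left_mono) auto
          finally show "norm (Dxy p z h W - Dxy x z h W) \<le> tau * norm (x' - x) * norm w ^ k * norm h"
            by (simp add: algebra_simps)
        qed
      qed
      moreover have "Dxy x z (x - x) W = 0" using linear_0[OF lin_u[OF x z]] by simp
      ultimately show ?thesis by (simp add: power2_eq_square algebra_simps)
    qed
    have TY: "f x y = (\<Sum>i<k. (1 / fact i) * Dy i x yhat (replicate i w)) + integral {0..1} (\<lambda>t. rho t * Dy k x (yt t) W)
        \<and> (\<lambda>t. rho t * Dy k x (yt t) W) integrable_on {0..1}"
      if x: "x \<in> X" for x
    proof -
      define Df where "Df = (\<lambda>m t. Dy m x (yt t) (replicate m w))"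
      have vd: "(Df m has_vector_derivative Df (Suc m) t) (at t within {0..1})"
        if m: "m < k" and t0: "0 \<le> t" and t1: "t \<le> 1" for m t
      proof -
        have t: "t \<in> {0..1}" using t0 t1 by simp
        have d1: "((\<lambda>y'. Dy m x y' (replicate m w)) has_derivative (\<lambda>v. Dy (Suc m) x (yt t) (v # replicate m w))) (at (yt t) within Y)"
          using Dy1 m x ytY[OF t] by blast
        have dyt: "(yt has_derivative (\<lambda>s. s *\<^sub>R w)) (at t within {0..1})"
          unfolding yt_def by (auto intro!: derivative_eq_intros)
        have sub: "yt ` {0..1} \<subseteq> Y" using ytY by blast
        have "((\<lambda>y'. Dy m x y' (replicate m w)) \<circ> yt has_derivative (\<lambda>v. Dy (Suc m) x (yt t) (v # replicate m w)) \<circ> (\<lambda>s. s *\<^sub>R w)) (at t within {0..1})"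
          by (rule diff_chain_within[OF dyt has_derivative_subset[OF d1 sub]])
        moreover have "(\<lambda>v. Dy (Suc m) x (yt t) (v # replicate m w)) \<circ> (\<lambda>s. s *\<^sub>R w) = (\<lambda>s. s *\<^sub>R Df (Suc m) t)"
          using linear_scale[OF has_derivative_linear[OF d1]] by (auto simp: Df_def)
        ultimately show ?thesis unfolding has_vector_derivative_def Df_def by (simp add: comp_def)
      qed
      have kp: "0 < k" using True by simp
      have eqi: "(\<lambda>t. ((1 - t) ^ (k - 1) / fact (k - 1)) *\<^sub>R Df k t) = (\<lambda>t. rho t * Dy k x (yt t) W)"
        by (simp add: rho_def Df_def W_def)
      have T1: "Df 0 1 = (\<Sum>i<k. ((1 - 0) ^ i / fact i) *\<^sub>R Df i 0) + integral {0..1} (\<lambda>t. ((1 - t) ^ (k - 1) / fact (k - 1)) *\<^sub>R Df k t)"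
        by (rule Taylor_integral[of k Df "Df 0" 0 1, OF kp refl vd]) auto
      have T2: "(\<lambda>t. ((1 - t) ^ (k - 1) / fact (k - 1)) *\<^sub>R Df k t) integrable_on {0..1}"
        by (rule Taylor_integrable[of k Df "Df 0" 0 1, OF kp refl vd]) auto
      have "Df 0 1 = f x y" by (simp add: Df_def Dy0 yt_def w_def)
      moreover have "Df i 0 = Dy i x yhat (replicate i w)" for i by (simp add: Df_def yt_def)
      ultimately show ?thesis using T1 T2 unfolding eqi by simp
    qed
    have rho_nn: "0 \<le> rho t" if "t \<in> {0..1}" for t
      using that by (simp add: rho_def)
    have rho_cont: "continuous_on {0..1} rho"
      unfolding rho_def by (intro continuous_intros) auto
    have rho_int: "(rho has_integral (1 / fact k)) {0..1}"
    proof -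
      have "(rho has_integral ((\<lambda>t. - ((1 - t) ^ k / fact k)) 1 - (\<lambda>t. - ((1 - t) ^ k / fact k)) 0)) {0..1}"
      proof (rule fundamental_theorem_of_calculus)
        fix t :: real assume "t \<in> {0..1}"
        have fk: "fact k = real k * fact (k - 1)" using True by (simp add: fact_reduce)
        have "((\<lambda>t. - ((1 - t) ^ k / fact k)) has_real_derivative (real k * (1 - t) ^ (k - 1) / fact k)) (at t within {0..1})"
          by (auto intro!: derivative_eq_intros)
        moreover have "real k * (1 - t) ^ (k - 1) / fact k = rho t"
          using True by (simp add: rho_def fk)
        ultimately show "((\<lambda>t. - ((1 - t) ^ k / fact k)) has_vector_derivative rho t) (at t within {0..1})"
          by (simp add: has_real_derivative_iff_has_vector_derivative)
      qed simp
      moreover have "(0::real) ^ k = 0" using True by simp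
      ultimately show ?thesis by simp
    qed
    have rho_integral: "integral {0..1} rho = 1 / fact k" using rho_int by (rule integral_unique)
    have yt_cont: "continuous_on {0..1} yt" unfolding yt_def by (intro continuous_intros)
    have Int1: "(\<lambda>t. rho t * Dy k x (yt t) W) integrable_on {0..1}" if "x \<in> X" for x
      using TY[OF that] by blast
    have Int2a: "(\<lambda>t. rho t * Dxy x (yt t) (x' - x) W) integrable_on {0..1}"
      if x: "x \<in> X" and x': "x' \<in> X" for x x'
    proof -
      define C where "C = tau * norm (x' - x) ^ 2 * norm w ^ k"
      have C0: "0 \<le> C" using tau_nn by (simp add: C_def)
      define L where "L = (\<lambda>t. Dxy x (yt t) (x' - x) W)"
      define g0 where "g0 = (\<lambda>t. Dy k x' (yt t) W - Dy k x (yt t) W)"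
      have g0c: "continuous_on {0..1} g0" unfolding g0_def
        by (intro continuous_on_diff continuous_on_compose2[OF _ yt_cont] ) (use cont1 x x' ytY in auto)
      have "bounded (g0 ` {0..1})" by (intro compact_imp_bounded compact_continuous_image g0c) simp
      then obtain M0 where M0: "\<And>t. t \<in> {0..1} \<Longrightarrow> \<bar>g0 t\<bar> \<le> M0" unfolding bounded_iff by (metis image_eqI real_norm_def)
      have Lb: "\<bar>L t\<bar> \<le> M0 + C" if t: "t \<in> {0..1}" for t
      proof -
        have "\<bar>g0 t - L t\<bar> \<le> C" using MVT[OF x x' ytY[OF t]] by (simp add: g0_def L_def C_def)
        then show ?thesis using M0[OF t] by linarith
      qed
      define xn where "xn = (\<lambda>n::nat. x + (1 / real (Suc n)) *\<^sub>R (x' - x))"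
      have xnX: "xn n \<in> X" for n
      proof -
        have "xn n = (1 - 1 / real (Suc n)) *\<^sub>R x + (1 / real (Suc n)) *\<^sub>R x'"
          by (simp add: xn_def algebra_simps)
        then show ?thesis using X(1) x x' by (simp add: convexD_alt)
      qed
      define q where "q = (\<lambda>n t. real (Suc n) * (rho t * Dy k (xn n) (yt t) W - rho t * Dy k x (yt t) W))"
      have qint: "q n integrable_on {0..1}" for n
      proof -
        have "(\<lambda>t. real (Suc n) *\<^sub>R (rho t * Dy k (xn n) (yt t) W - rho t * Dy k x (yt t) W)) integrable_on {0..1}"
          by (intro integrable_cmul integrable_diff Int1 xnX x)
        then show ?thesis by (simp add: q_def)
      qed
      have qapprox: "\<bar>q n t - rho t * L t\<bar> \<le> rho t * C / real (Suc n)" if t: "t \<in> {0..1}" for n t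
      proof -
        define N where "N = real (Suc n)"
        have N0: "N > 0" by (simp add: N_def)
        define d where "d = Dy k (xn n) (yt t) W - Dy k x (yt t) W"
        have xd: "xn n - x = (1 / N) *\<^sub>R (x' - x)" by (simp add: xn_def N_def)
        have "\<bar>d - Dxy x (yt t) (xn n - x) W\<bar> \<le> tau * norm (xn n - x) ^ 2 * norm w ^ k"
          using MVT[OF x xnX ytY[OF t]] by (simp add: d_def)
        moreover have "Dxy x (yt t) (xn n - x) W = (1 / N) * L t"
          unfolding xd L_def using linear_scale[OF lin_u[OF x ytY[OF t]]] by simp
        moreover have "norm (xn n - x) ^ 2 = (1 / N) ^ 2 * norm (x' - x) ^ 2"
          using N0 by (simp add: xd power_divide)
        ultimately have b: "\<bar>d - (1 / N) * L t\<bar> \<le> (1 / N) ^ 2 * C"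
          by (simp add: C_def algebra_simps)
        have qN: "q n t = N * (rho t * d)" by (simp add: q_def N_def d_def right_diff_distrib)
        have "q n t - rho t * L t = rho t * (N * (d - (1 / N) * L t))"
          using N0 unfolding qN by (simp add: algebra_simps)
        then have "\<bar>q n t - rho t * L t\<bar> = rho t * (N * \<bar>d - (1 / N) * L t\<bar>)"
          using rho_nn[OF t] N0 by (simp add: abs_mult)
        also have "\<dots> \<le> rho t * (N * ((1 / N) ^ 2 * C))"
          using b rho_nn[OF t] N0 by (intro mult_left_mono) auto
        also have "\<dots> = rho t * C / N" using N0 by (simp add: power2_eq_square field_simps)
        finally show ?thesis by (simp add: N_def)
      qed
      have hint: "(\<lambda>t. rho t * (M0 + 2 * C)) integrable_on {0..1}"
        using has_integral_mult_left[OF rho_int, of "M0 + 2 * C"] by blast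
      have "(\<lambda>t. rho t * L t) integrable_on {0..1}"
      proof (rule dominated_convergence(1)[OF qint hint])
        fix n and t :: real assume t: "t \<in> {0..1}"
        have "rho t * C / real (Suc n) \<le> rho t * C"
        proof -
          have "0 \<le> rho t * C" using rho_nn[OF t] C0 by simp
          moreover have "1 \<le> real (Suc n)" by simp
          ultimately show ?thesis by (simp add: divide_le_eq mult_le_cancel_left1)
        qed
        then have "\<bar>q n t - rho t * L t\<bar> \<le> rho t * C" using qapprox[OF t, of n] by linarith
        moreover have "\<bar>rho t * L t\<bar> \<le> rho t * (M0 + C)"
          using Lb[OF t] rho_nn[OF t] by (simp add: abs_mult mult_left_mono)
        ultimately show "norm (q n t) \<le> rho t * (M0 + 2 * C)" by (simp add: algebra_simps)
      next
        fix t :: real assume t: "t \<in> {0..1}"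
        have "(\<lambda>n. q n t - rho t * L t) \<longlonglongrightarrow> 0"
        proof (rule Lim_null_comparison)
          show "\<forall>\<^sub>F n in sequentially. norm (q n t - rho t * L t) \<le> rho t * C * (1 / real (Suc n))"
            using qapprox[OF t] by simp
          show "(\<lambda>n. rho t * C * (1 / real (Suc n))) \<longlonglongrightarrow> 0"
            by (intro tendsto_mult_right_zero LIMSEQ_Suc lim_1_over_n)
        qed
        then show "(\<lambda>n. q n t) \<longlonglongrightarrow> rho t * L t" by (simp add: LIM_zero_iff)
      qed
      then show ?thesis by (simp add: L_def)
    qed
    have Int2: "(\<lambda>t. rho t * Dxy x (yt t) u W) integrable_on {0..1}" if x: "x \<in> X" for x u
    proof -
      define e where "e = r0 / (norm u + 1)"
      have np: "norm u + 1 > 0" by (simp add: add_nonneg_pos)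
      have e: "e > 0" unfolding e_def using r0 np by simp
      have "norm (e *\<^sub>R u) = r0 * norm u / (norm u + 1)" using r0 by (simp add: e_def)
      also have "\<dots> < r0" using r0 np by (simp add: divide_less_eq)
      finally have z1X: "x0 + e *\<^sub>R u \<in> X" using r0 by (auto simp: dist_norm)
      have ueq: "u = (1 / e) *\<^sub>R ((x0 + e *\<^sub>R u - x) - (x0 - x))" using e by simp
      have "(\<lambda>t. (1 / e) *\<^sub>R (rho t * Dxy x (yt t) (x0 + e *\<^sub>R u - x) W - rho t * Dxy x (yt t) (x0 - x) W)) integrable_on {0..1}"
        by (intro integrable_cmul integrable_diff Int2a x z1X x0X)
      then show ?thesis
      proof (rule integrable_eq)
        fix t :: real assume t: "t \<in> {0..1}"
        have l: "linear (\<lambda>u. Dxy x (yt t) u W)" using lin_u[OF x ytY[OF t]] .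
        have "Dxy x (yt t) (x0 + e *\<^sub>R u - x) W - Dxy x (yt t) (x0 - x) W
            = Dxy x (yt t) ((x0 + e *\<^sub>R u - x) - (x0 - x)) W"
          by (simp only: linear_diff[OF l])
        also have "(x0 + e *\<^sub>R u - x) - (x0 - x) = e *\<^sub>R u" by simp
        finally have "Dxy x (yt t) (x0 + e *\<^sub>R u - x) W - Dxy x (yt t) (x0 - x) W = e * Dxy x (yt t) u W"
          by (simp add: linear_scale[OF l])
        then have E: "Dxy x (yt t) u W = (1 / e) * (Dxy x (yt t) (x0 + e *\<^sub>R u - x) W - Dxy x (yt t) (x0 - x) W)"
          using e by simp
        then show "(1 / e) *\<^sub>R (rho t * Dxy x (yt t) (x0 + e *\<^sub>R u - x) W - rho t * Dxy x (yt t) (x0 - x) W)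
            = rho t * Dxy x (yt t) u W"
          by (subst E) (simp add: right_diff_distrib)
      qed
    qed
    define I where "I = (\<lambda>x. integral {0..1} (\<lambda>t. rho t * Dy k x (yt t) W))"
    define L where "L = (\<lambda>x u. integral {0..1} (\<lambda>t. rho t * Dxy x (yt t) u W))"
    have intc: "((\<lambda>t. rho t * c) has_integral (1 / fact k * c)) {0..1}" for c
      using has_integral_mult_left[OF rho_int, of c] .
    have DI: "(I has_derivative L x) (at x within X)" if x: "x \<in> X" for x
      unfolding has_derivative_within_alt
    proof (intro conjI allI impI)
      have "linear (L x)"
      proof (rule linearI)
        fix a b
        have "L x (a + b) = integral {0..1} (\<lambda>t. rho t * Dxy x (yt t) a W + rho t * Dxy x (yt t) b W)"
          unfolding L_def
          by (rule integral_cong) (simp add: linear_add[OF lin_u[OF x ytY]] distrib_left)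
        also have "\<dots> = L x a + L x b" unfolding L_def by (rule integral_add[OF Int2[OF x] Int2[OF x]])
        finally show "L x (a + b) = L x a + L x b" .
      next
        fix c :: real and a
        have "L x (c *\<^sub>R a) = integral {0..1} (\<lambda>t. c * (rho t * Dxy x (yt t) a W))"
          unfolding L_def
          by (rule integral_cong) (simp add: linear_scale[OF lin_u[OF x ytY]])
        also have "\<dots> = c * L x a" unfolding L_def using integral_mult[OF Int2[OF x], of c] by simp
        finally show "L x (c *\<^sub>R a) = c *\<^sub>R L x a" by simp
      qed
      then show "bounded_linear (L x)" using linear_conv_bounded_linear by blast
    next
      fix e :: real assume e: "e > 0"
      define K where "K = tau * norm w ^ k / fact k"
      have K0: "0 \<le> K" using tau_nn by (simp add: K_def)
      have err: "\<bar>I x' - I x - L x (x' - x)\<bar> \<le> K * norm (x' - x) ^ 2" if x': "x' \<in> X" for x'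
      proof -
        have "I x' - I x - L x (x' - x) = integral {0..1}
            (\<lambda>t. rho t * Dy k x' (yt t) W - rho t * Dy k x (yt t) W - rho t * Dxy x (yt t) (x' - x) W)"
          unfolding I_def L_def
          by (simp add: integral_diff Int1 Int2 integrable_diff x x')
        also have "\<dots> = integral {0..1} (\<lambda>t. rho t * (Dy k x' (yt t) W - Dy k x (yt t) W - Dxy x (yt t) (x' - x) W))"
          by (simp add: algebra_simps)
        finally have eq: "I x' - I x - L x (x' - x) = \<dots>" .
        have "norm (integral {0..1} (\<lambda>t. rho t * (Dy k x' (yt t) W - Dy k x (yt t) W - Dxy x (yt t) (x' - x) W)))
            \<le> integral {0..1} (\<lambda>t. rho t * (tau * norm (x' - x) ^ 2 * norm w ^ k))"
        proof (rule integral_norm_bound_integral)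
          show "(\<lambda>t. rho t * (Dy k x' (yt t) W - Dy k x (yt t) W - Dxy x (yt t) (x' - x) W)) integrable_on {0..1}"
            using integrable_diff[OF integrable_diff[OF Int1[OF x'] Int1[OF x]] Int2[OF x, of "x' - x"]]
            by (simp add: right_diff_distrib)
          show "(\<lambda>t. rho t * (tau * norm (x' - x) ^ 2 * norm w ^ k)) integrable_on {0..1}"
            using intc by blast
          fix t :: real assume t: "t \<in> {0..1}"
          show "norm (rho t * (Dy k x' (yt t) W - Dy k x (yt t) W - Dxy x (yt t) (x' - x) W))
              \<le> rho t * (tau * norm (x' - x) ^ 2 * norm w ^ k)"
            using MVT[OF x x' ytY[OF t]] rho_nn[OF t] by (simp add: abs_mult mult_left_mono)
        qed
        also have "\<dots> = K * norm (x' - x) ^ 2"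
          using integral_unique[OF intc] by (simp add: K_def)
        finally show ?thesis using eq by simp
      qed
      define d where "d = e / (K + 1)"
      have d: "d > 0" using e K0 by (simp add: d_def)
      show "\<exists>d>0. \<forall>x'\<in>X. norm (x' - x) < d \<longrightarrow> norm (I x' - I x - L x (x' - x)) \<le> e * norm (x' - x)"
      proof (intro exI[of _ d] conjI ballI impI d)
        fix x' assume x': "x' \<in> X" and nd: "norm (x' - x) < d"
        have "K * norm (x' - x) \<le> K * d" using nd K0 by (simp add: mult_left_mono)
        also have "K * d \<le> e" using e K0 by (simp add: d_def field_simps)
        finally have "K * norm (x' - x) * norm (x' - x) \<le> e * norm (x' - x)"
          by (simp add: mult_right_mono)
        then show "norm (I x' - I x - L x (x' - x)) \<le> e * norm (x' - x)"
          using err[OF x'] by (simp add: power2_eq_square mult.assoc)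
      qed
    qed
    have TI: "taylor_y Dy k yhat x y = f x y - I x + (1 / fact k) * Dy k x yhat W" if x: "x \<in> X" for x
    proof -
      have "taylor_y Dy k yhat x y = (\<Sum>j<Suc k. (1 / fact j) * Dy j x yhat (replicate j w))"
        by (simp add: taylor_y_def w_def lessThan_Suc_atMost)
      also have "\<dots> = (\<Sum>j<k. (1 / fact j) * Dy j x yhat (replicate j w)) + (1 / fact k) * Dy k x yhat W"
        by (simp add: W_def)
      finally show ?thesis using TY[OF x] by (simp add: I_def)
    qed
    define der where "der = (\<lambda>x u. gx x y \<bullet> u - L x u + (1 / fact k) * Dxy x yhat u W)"
    have DT: "((\<lambda>x'. taylor_y Dy k yhat x' y) has_derivative der x) (at x within X)" if x: "x \<in> X" for x
    proof -
      have "((\<lambda>x'. f x' y - I x' + (1 / fact k) * Dy k x' yhat W) has_derivative der x) (at x within X)"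
        unfolding der_def
        by (intro has_derivative_add has_derivative_diff has_derivative_mult_right DI x)
          (use gx Dxy1 x yY yh in blast)+
      then show ?thesis by (rule has_derivative_transform[OF x, rotated]) (simp add: TI)
    qed
    define G where "G = (\<lambda>x. \<Sum>b\<in>Basis. der x b *\<^sub>R b)"
    have derG: "der x u = G x \<bullet> u" if x: "x \<in> X" for x u
      unfolding G_def by (rule lin_repr[OF has_derivative_linear[OF DT[OF x]]])
    have nw: "norm w \<le> D"
      using diameter_bounded_bound[OF compact_imp_bounded[OF Y(3)] yY yh] D by (simp add: w_def dist_norm)
    have D0: "0 \<le> D" using diameter_ge_0[OF compact_imp_bounded[OF Y(3)]] D by linarith
    define Kf where "Kf = lam + 2 * tau * D ^ k / fact k"
    have Kf0: "0 \<le> Kf" using lam_nn tau_nn D0 by (simp add: Kf_def)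
    have main: "\<bar>der x' v - der x v\<bar> \<le> Kf * norm (x' - x) * norm v" if x: "x \<in> X" and x': "x' \<in> X" for x x' v
    proof -
      have Lb: "\<bar>L x' v - L x v\<bar> \<le> 1 / fact k * (tau * norm (x' - x) * norm v * norm w ^ k)"
      proof -
        have "L x' v - L x v = integral {0..1} (\<lambda>t. rho t * (Dxy x' (yt t) v W - Dxy x (yt t) v W))"
          unfolding L_def by (simp add: integral_diff[OF Int2[OF x'] Int2[OF x], symmetric] algebra_simps)
        also have "norm \<dots> \<le> integral {0..1} (\<lambda>t. rho t * (tau * norm (x' - x) * norm v * norm w ^ k))"
        proof (rule integral_norm_bound_integral)
          show "(\<lambda>t. rho t * (Dxy x' (yt t) v W - Dxy x (yt t) v W)) integrable_on {0..1}"
            using integrable_diff[OF Int2[OF x', of v] Int2[OF x, of v]] by (simp add: right_diff_distrib)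
          show "(\<lambda>t. rho t * (tau * norm (x' - x) * norm v * norm w ^ k)) integrable_on {0..1}"
            using intc by blast
          fix t :: real assume t: "t \<in> {0..1}"
          show "norm (rho t * (Dxy x' (yt t) v W - Dxy x (yt t) v W)) \<le> rho t * (tau * norm (x' - x) * norm v * norm w ^ k)"
            using KB[OF x x' ytY[OF t], of v w] rho_nn[OF t] by (simp add: abs_mult mult_left_mono W_def)
        qed
        also have "\<dots> = 1 / fact k * (tau * norm (x' - x) * norm v * norm w ^ k)"
          using integral_unique[OF intc] by simp
        finally show ?thesis by simp
      qed
      have gb: "\<bar>(gx x' y - gx x y) \<bullet> v\<bar> \<le> lam * norm (x' - x) * norm v"
        using Cauchy_Schwarz_ineq2[of "gx x' y - gx x y" v] gxl[OF x x' yY]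
        by (meson mult_right_mono norm_ge_zero order_trans)
      have db: "\<bar>Dxy x' yhat v W - Dxy x yhat v W\<bar> \<le> tau * norm (x' - x) * norm v * norm w ^ k"
        using KB[OF x x' yh, of v w] by (simp add: W_def)
      have deq: "der x' v - der x v = (gx x' y - gx x y) \<bullet> v - (L x' v - L x v) + (1 / fact k) * (Dxy x' yhat v W - Dxy x yhat v W)"
        by (simp add: der_def inner_diff_left algebra_simps)
      then have "\<bar>der x' v - der x v\<bar> \<le> lam * norm (x' - x) * norm v + 1 / fact k * (tau * norm (x' - x) * norm v * norm w ^ k)
           + 1 / fact k * (tau * norm (x' - x) * norm v * norm w ^ k)"
      proof -
        have fk: "0 \<le> 1 / (fact k :: real)" by (rule divide_nonneg_pos) auto
        have c1: "\<bar>(1 / fact k) * (Dxy x' yhat v W - Dxy x yhat v W)\<bar> \<le> 1 / fact k * (tau * norm (x' - x) * norm v * norm w ^ k)"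
          unfolding abs_mult using db fk by (simp add: divide_right_mono)
        have tri: "\<bar>a - b + (1 / fact k) * c\<bar> \<le> \<bar>a\<bar> + \<bar>b\<bar> + \<bar>(1 / fact k) * c\<bar>" for a b c :: real
          by (smt (verit))
        show ?thesis unfolding deq by (rule order_trans[OF tri add_mono[OF add_mono[OF gb Lb] c1]])
      qed
      also have "\<dots> = (lam + 2 * tau * norm w ^ k / fact k) * norm (x' - x) * norm v"
        by (simp add: algebra_simps)
      also have "\<dots> \<le> Kf * norm (x' - x) * norm v"
      proof -
        have "norm w ^ k \<le> D ^ k" using nw by (simp add: power_mono)
        then have "2 * tau * norm w ^ k / fact k \<le> 2 * tau * D ^ k / fact k"
          using tau_nn by (simp add: divide_right_mono mult_left_mono)
        then show ?thesis unfolding Kf_def by (intro mult_right_mono) auto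
      qed
      finally show ?thesis .
    qed
    show ?thesis
    proof (intro exI[of _ G] conjI ballI)
      fix x assume x: "x \<in> X"
      show "((\<lambda>x'. taylor_y Dy k yhat x' y) has_derivative (\<lambda>u. G x \<bullet> u)) (at x within X)"
      proof -
        have "der x = (\<lambda>u. G x \<bullet> u)" by (rule ext) (rule derG[OF x])
        then show ?thesis using DT[OF x] by simp
      qed
    next
      fix x x' assume x: "x \<in> X" and x': "x' \<in> X"
      define v where "v = G x' - G x"
      have "norm v ^ 2 = \<bar>der x' v - der x v\<bar>"
        by (simp add: derG x x' v_def inner_diff_left[symmetric] power2_norm_eq_inner)
      also have "\<dots> \<le> Kf * norm (x' - x) * norm v" by (rule main[OF x x'])
      finally have "norm v * norm v \<le> (Kf * norm (x' - x)) * norm v" by (simp add: power2_eq_square)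
      then have "norm v \<le> Kf * norm (x' - x)"
        using Kf0 by (cases "norm v = 0") (simp_all add: mult_le_cancel_right)
      then show "norm (G x' - G x) \<le> (lam + (if k \<ge> 1 then 2 * tau * D ^ k / fact k else 0)) * norm (x' - x)"
        using True by (simp add: v_def Kf_def)
    qed
  qed
qed

end
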